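(* There exist $\mathtt r_0,\mathtt c_*>0$ such that, for any $0<\mathtt r\le\mathtt r_0$ and any choice of tangential sites $S^+=\{\overline{\jmath}_1,\dots,\overline{\jmath}_\nu\}\in\mathcal V(\mathtt r)$, the $\nu\times\nu$ matrix $$\mathbb A:=\frac12\mathbb D\,\mathrm{diag}\Big(\frac{\lambda(2j)}{2\lambda(j)-\lambda(2j)}\Big)_{j\in S^+}+\mathbb D\,\mathbb B,\qquad \mathbb D:=\mathrm{diag}(\lambda(j))_{j\in S^+},$$ with $\mathbb B_j^k=\mathtt b_{jk}$ for $j\ne k$ and $\mathbb B_j^j=0$, where $$\mathtt b_{jk}=\frac23\frac{(1+k^2)(1+j^2)(2+k^2+j^2)}{(3+k^2+j^2+kj)(3+k^2+j^2-kj)},$$ satisfies $|\det\mathbb A|\ge\mathtt c_*\,\overline{\jmath}_1^{\,3\nu}$.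
   Context: $\nu\ge2$ is fixed, $\lambda(j)=j\frac{4+j^2}{1+j^2}$. For $\mathtt r\in(0,1)$, a set $S^+=\{\overline{\jmath}_1,\dots,\overline{\jmath}_\nu\}$ of $\nu$ distinct positive integers with $\overline{\jmath}_1=\max_i\overline{\jmath}_i$ belongs to $\mathcal V(\mathtt r)$ if $\min_i\overline{\jmath}_i>1/\mathtt r$, $|\overline{\jmath}_i/\overline{\jmath}_1-1|\le\mathtt r$ for all $i$, and $\sum_i\frac{\overline{\jmath}_i}{1+\overline{\jmath}_i^2}\ell_i\ne0$ for all $\ell\in\mathbb{Z}^\nu$ with $\sum_i|\ell_i|=4$. The rows and columns of $\mathbb A$ are indexed by $S^+$. *)

theory Defs
  imports Complex_Main "Jordan_Normal_Form.Determinant"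
begin

definition lam :: "real \<Rightarrow> real" where
  "lam j = j * (4 + j^2) / (1 + j^2)"

definition bcoef :: "real \<Rightarrow> real \<Rightarrow> real" where
  "bcoef j k = 2/3 * ((1 + k^2) * (1 + j^2) * (2 + k^2 + j^2))
                / ((3 + k^2 + j^2 + k*j) * (3 + k^2 + j^2 - k*j))"

definition Vset :: "nat \<Rightarrow> real \<Rightarrow> nat set set" where
  "Vset nu r = {S. 0 < r \<and> r < 1 \<and> finite S \<and> card S = nu \<and> (\<forall>j\<in>S. 0 < j) \<and>
      real (Min S) > 1 / r \<and>
      (\<forall>j\<in>S. \<bar>real j / real (Max S) - 1\<bar> \<le> r) \<and>
      (\<forall>l :: nat \<Rightarrow> int. (\<Sum>j\<in>S. \<bar>l j\<bar>) = 4 \<longrightarrow>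
          (\<Sum>j\<in>S. real j / (1 + (real j)^2) * real_of_int (l j)) \<noteq> 0)}"

definition Aentry :: "nat \<Rightarrow> nat \<Rightarrow> real" where
  "Aentry j k =
     (if j = k then 1/2 * lam (real j) * (lam (2 * real j) / (2 * lam (real j) - lam (2 * real j))) else 0)
     + lam (real j) * (if j = k then 0 else bcoef (real j) (real k))"

text \<open>The matrix A as a nu x nu matrix, indexing S by its elements in increasing order
  (the determinant does not depend on the chosen enumeration).\<close>
definition Amat :: "nat set \<Rightarrow> real mat" where
  "Amat S = (let xs = sorted_list_of_set S in
     mat (card S) (card S) (\<lambda>(a, b). Aentry (xs ! a) (xs ! b)))"

end

theory Submission
  imports Defs "HOL-Analysis.Product_Vector"
begin
definition F1 :: "real \<Rightarrow> real \<Rightarrow> real" where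
  "F1 x t = 2*(4*t^2+x^2)*(t^2+x^2)/(9*x)"
definition F2 :: "real \<Rightarrow> real \<Rightarrow> real \<Rightarrow> real" where
  "F2 x y t = x*(4*t^2+x^2)/(t^2+x^2) * (2/3 * ((t^2+y^2)*(t^2+x^2)*(2*t^2+x^2+y^2))
      / ((3*t^2+x^2+y^2+x*y)*(3*t^2+x^2+y^2-x*y)))"

lemma diag_id:
  assumes "j > 0"
  shows "1/2 * lam j * (lam (2*j) / (2 * lam j - lam (2*j))) = 2*(4+j^2)*(1+j^2)/(9*j)"
proof -
  have a: "2 * lam j - lam (2*j) = 18*j^3/((1+j^2)*(1+4*j^2))"
  proof -
    have p1: "1+j^2 > 0" "1 + (2*j)^2 > 0" "1+4*j^2 > 0" by (auto simp: add_pos_nonneg)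
    show ?thesis unfolding lam_def using p1
      apply (simp add: divide_simps)
      apply (simp add: algebra_simps power2_eq_square power3_eq_cube)
      done
  qed
  have b: "lam (2*j) = 8*j*(1+j^2)/(1+4*j^2)"
    unfolding lam_def by (simp add: field_simps power2_eq_square)
  have p1: "1+j^2 > 0" "1+4*j^2 > 0" by (auto simp: add_pos_nonneg)
  have c: "lam (2*j) / (2 * lam j - lam (2*j)) = 4*(1+j^2)^2/(9*j^2)"
    unfolding a unfolding b using p1 assms
    by (simp add: divide_simps) (simp add: algebra_simps power2_eq_square power3_eq_cube)
  show ?thesis unfolding c unfolding lam_def using p1 assms
    by (simp add: divide_simps) (simp add: algebra_simps power2_eq_square power3_eq_cube)
qed

lemma diag_scale:
  assumes "j > 0" "J > 0"
  shows "2*(4+j^2)*(1+j^2)/(9*j) / J^3 = F1 (j/J) (1/J)"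
  using assms unfolding F1_def by (simp add: field_simps power2_eq_square power3_eq_cube)

lemma gen_id:
  fixes J x P A B C D E :: real
  assumes "J > 0" "B \<noteq> 0" "D \<noteq> 0" "E \<noteq> 0"
  shows "(J * x) * (J^2 * P) / (J^2 * B) * (2/3 * ((J^2 * A) * (J^2 * B) * (J^2 * C))
        / ((J^2 * D) * (J^2 * E))) / J^3 = x * P / B * (2/3 * (A * B * C) / (D * E))"
  using assms by (simp add: field_simps power2_eq_square power3_eq_cube)

lemma off_scale:
  assumes jp: "j > 0" and kp: "k > 0" and Jp: "J > 0"
  shows "lam j * bcoef j k / J^3 = F2 (j/J) (k/J) (1/J)"
proof -
  define x where "x = j/J"
  define y where "y = k/J"
  define t where "t = 1/J"
  have sq: "0 \<le> (k - j)^2" by simp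
  have "(k - j)^2 = k^2 + j^2 - 2*(k*j)" by (simp add: power2_diff algebra_simps)
  moreover have "k*j > 0" using kp jp by simp
  ultimately have d1: "3 + k^2 + j^2 - k*j > 0" using sq by linarith
  have d2: "3 + k^2 + j^2 + k*j > 0" using jp kp by (simp add: add_pos_pos)
  have h1: "1 + j^2 = J^2 * (t^2 + x^2)" using Jp unfolding x_def t_def by (simp add: field_simps power2_eq_square)
  have h2: "1 + k^2 = J^2 * (t^2 + y^2)" using Jp unfolding y_def t_def by (simp add: field_simps power2_eq_square)
  have h3: "2 + k^2 + j^2 = J^2 * (2*t^2 + x^2 + y^2)" using Jp unfolding x_def y_def t_def by (simp add: field_simps power2_eq_square)
  have h4: "3 + k^2 + j^2 + k*j = J^2 * (3*t^2 + x^2 + y^2 + x*y)" using Jp unfolding x_def y_def t_def by (simp add: field_simps power2_eq_square)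
  have h5: "3 + k^2 + j^2 - k*j = J^2 * (3*t^2 + x^2 + y^2 - x*y)" using Jp unfolding x_def y_def t_def by (simp add: field_simps power2_eq_square)
  have h6: "4 + j^2 = J^2 * (4*t^2 + x^2)" using Jp unfolding x_def t_def by (simp add: field_simps power2_eq_square)
  have h7: "j = J * x" using Jp unfolding x_def by simp
  have J2: "J^2 > 0" using Jp by simp
  have D1: "3*t^2 + x^2 + y^2 + x*y > 0" using d2 J2 unfolding h4 by (simp add: zero_less_mult_iff)
  have D2: "3*t^2 + x^2 + y^2 - x*y > 0" using d1 J2 unfolding h5 by (simp add: zero_less_mult_iff)
  have D3: "t^2 + x^2 > 0" using jp Jp unfolding x_def by (simp add: add_nonneg_pos)
  have "lam j * bcoef j k / J^3
     = (J * x) * (J^2 * (4*t^2 + x^2)) / (J^2 * (t^2 + x^2)) *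
       (2/3 * ((J^2 * (t^2 + y^2)) * (J^2 * (t^2 + x^2)) * (J^2 * (2*t^2 + x^2 + y^2)))
        / ((J^2 * (3*t^2 + x^2 + y^2 + x*y)) * (J^2 * (3*t^2 + x^2 + y^2 - x*y)))) / J^3"
    unfolding lam_def bcoef_def h1 h2 h3 h4 h5 h6 by (simp only: h7[symmetric])
  also have "\<dots> = F2 x y t"
    unfolding F2_def
    by (rule gen_id[OF Jp]) (use D1 D2 D3 in linarith)+
  finally show ?thesis unfolding x_def y_def t_def .
qed

lemma cont1: "isCont (\<lambda>p. F1 (fst p) (snd p)) (1,0)"
  unfolding F1_def by (intro continuous_intros) simp_all
lemma cont2: "isCont (\<lambda>p. F2 (fst p) (fst (snd p)) (snd (snd p))) (1,1,0)"
  unfolding F2_def by (intro continuous_intros) simp_all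
lemma F1v: "F1 1 0 = 2/9" by (simp add: F1_def)
lemma F2v: "F2 1 1 0 = 4/9" by (simp add: F2_def)

lemma isCont_eps:
  fixes f :: "'a::metric_space \<Rightarrow> 'b::metric_space"
  assumes "isCont f a" "e > 0"
  shows "\<exists>d>0. \<forall>x. dist x a < d \<longrightarrow> dist (f x) (f a) < e"
proof -
  obtain d where "d > 0" "\<forall>x. x \<noteq> a \<and> dist x a < d \<longrightarrow> dist (f x) (f a) < e"
    using metric_LIM_D[OF assms(1)[unfolded isCont_def] assms(2)] by blast
  then show ?thesis using assms(2) by (metis dist_self)
qed

lemma dist2: "dist (x::real, t::real) (1, 0) \<le> \<bar>x - 1\<bar> + \<bar>t\<bar>"
proof -
  have "dist (x, t) (1, 0) = norm (x - 1, t)" by (simp add: dist_norm)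
  also have "\<dots> \<le> norm (x - 1) + norm t" by (rule norm_Pair_le)
  finally show ?thesis by simp
qed

lemma dist3: "dist (x::real, y::real, t::real) (1, 1, 0) \<le> \<bar>x - 1\<bar> + \<bar>y - 1\<bar> + \<bar>t\<bar>"
proof -
  have "dist (x, y, t) (1, 1, 0) = norm (x - 1, y - 1, t)" by (simp add: dist_norm)
  also have "\<dots> \<le> norm (x - 1) + norm (y - 1, t)" by (rule norm_Pair_le)
  also have "norm (y - 1, t) \<le> norm (y - 1) + norm t" by (rule norm_Pair_le)
  finally show ?thesis by simp
qed

lemma prod_diff_bound:
  fixes a b :: "nat \<Rightarrow> real"
  assumes "finite I" "\<forall>i\<in>I. \<bar>a i\<bar> \<le> 1" "\<forall>i\<in>I. \<bar>b i\<bar> \<le> 1" "\<forall>i\<in>I. \<bar>a i - b i\<bar> \<le> d"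
  shows "\<bar>prod a I - prod b I\<bar> \<le> real (card I) * d"
  using assms
proof (induction I rule: finite_induct)
  case empty
  then show ?case by simp
next
  case (insert x F)
  have PB: "\<bar>prod b F\<bar> \<le> 1"
    unfolding abs_prod using insert.prems by (intro prod_le_1) auto
  have "prod a (insert x F) - prod b (insert x F) = a x * (prod a F - prod b F) + (a x - b x) * prod b F"
    using insert.hyps by (simp add: algebra_simps)
  also have "\<bar>\<dots>\<bar> \<le> \<bar>a x\<bar> * \<bar>prod a F - prod b F\<bar> + \<bar>a x - b x\<bar> * \<bar>prod b F\<bar>"
    by (metis abs_mult abs_triangle_ineq)
  also have "\<dots> \<le> 1 * (real (card F) * d) + d * 1"
    using insert PB
    by (intro add_mono mult_mono) auto
  finally show ?case using insert.hyps by (simp add: algebra_simps)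
qed

lemma det_pert:
  fixes M N :: "real mat"
  assumes M: "M \<in> carrier_mat n n" and N: "N \<in> carrier_mat n n"
    and bM: "\<forall>i<n. \<forall>j<n. \<bar>M $$ (i,j)\<bar> \<le> 1/2"
    and bd: "\<forall>i<n. \<forall>j<n. \<bar>N $$ (i,j) - M $$ (i,j)\<bar> \<le> d" and d: "d \<le> 1/2"
  shows "\<bar>det N - det M\<bar> \<le> fact n * real n * d"
proof -
  let ?P = "{p. p permutes {0..<n}}"
  let ?PN = "\<lambda>p. (\<Prod>i=0..<n. N $$ (i, p i))"
  let ?PM = "\<lambda>p. (\<Prod>i=0..<n. M $$ (i, p i))"
  have "det N - det M = (\<Sum>p\<in>?P. signof p * ?PN p) - (\<Sum>p\<in>?P. signof p * ?PM p)"
    unfolding det_def'[OF M] det_def'[OF N] by (rule refl)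
  also have "\<dots> = (\<Sum>p\<in>?P. signof p * (?PN p - ?PM p))"
    by (simp only: right_diff_distrib sum_subtractf)
  finally have eq: "det N - det M = (\<Sum>p\<in>?P. signof p * (?PN p - ?PM p))" .
  have bnd: "\<bar>signof p * (?PN p - ?PM p)\<bar> \<le> real n * d" if "p \<in> ?P" for p
  proof -
    from that have pp: "p permutes {0..<n}" by simp
    have pi: "p i < n" if "i < n" for i using permutes_in_image[OF pp] that by simp
    have s: "\<bar>(signof p :: real)\<bar> = 1" by (simp add: sign_def)
    have b1: "\<bar>M $$ (i, p i)\<bar> \<le> 1/2" if "i \<in> {0..<n}" for i
      using bM that pi[of i] by simp
    have b2: "\<bar>N $$ (i, p i) - M $$ (i, p i)\<bar> \<le> d" if "i \<in> {0..<n}" for i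
      using bd that pi[of i] by simp
    have "\<bar>?PN p - ?PM p\<bar> \<le> real (card {0..<n}) * d"
    proof (rule prod_diff_bound)
      show "finite {0..<n}" by simp
      show "\<forall>i\<in>{0..<n}. \<bar>M $$ (i, p i)\<bar> \<le> 1"
      proof
        fix i assume "i \<in> {0..<n}" from b1[OF this] show "\<bar>M $$ (i, p i)\<bar> \<le> 1" by linarith
      qed
      show "\<forall>i\<in>{0..<n}. \<bar>N $$ (i, p i) - M $$ (i, p i)\<bar> \<le> d" using b2 by blast
      show "\<forall>i\<in>{0..<n}. \<bar>N $$ (i, p i)\<bar> \<le> 1"
      proof
        fix i assume i: "i \<in> {0..<n}"
        from b1[OF i] b2[OF i] d show "\<bar>N $$ (i, p i)\<bar> \<le> 1" by linarith
      qed
    qed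
    then have "\<bar>?PN p - ?PM p\<bar> \<le> real n * d" by simp
    then show ?thesis by (simp only: abs_mult s mult_1)
  qed
  have "\<bar>det N - det M\<bar> \<le> (\<Sum>p\<in>?P. \<bar>signof p * (?PN p - ?PM p)\<bar>)"
    unfolding eq by (rule sum_abs)
  also have "\<dots> \<le> (\<Sum>p\<in>?P. real n * d)"
    by (rule sum_mono) (rule bnd)
  also have "\<dots> = real (card ?P) * (real n * d)" by (rule sum_constant)
  also have "card ?P = fact n" using card_permutations[of "{0..<n}" n] by simp
  finally show ?thesis by simp
qed

definition M0 :: "nat \<Rightarrow> real mat" where
  "M0 n = mat n n (\<lambda>(i,j). if i = j then 2/9 else 4/9)"

lemma M0_det: assumes "n \<ge> 1" shows "det (M0 n) \<noteq> 0"
proof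
  assume "det (M0 n) = 0"
  then obtain v where v: "v \<in> carrier_vec n" "v \<noteq> 0\<^sub>v n" "M0 n *\<^sub>v v = 0\<^sub>v n"
    using det_0_iff_vec_prod_zero[of "M0 n" n] by (auto simp: M0_def)
  define s where "s = (\<Sum>j=0..<n. v $ j)"
  have vi: "v $ i = 2 * s" if i: "i < n" for i
  proof -
    have "0 = (M0 n *\<^sub>v v) $ i" using v(3) i by simp
    also have "\<dots> = (\<Sum>j=0..<n. (if i = j then 2/9 else 4/9) * v $ j)"
      using i v(1) by (simp add: M0_def scalar_prod_def)
    also have "\<dots> = (\<Sum>j=0..<n. 4/9 * v $ j - (if i = j then 2/9 * v $ j else 0))"
      by (intro sum.cong) auto
    also have "\<dots> = (\<Sum>j=0..<n. 4/9 * v $ j) - (\<Sum>j=0..<n. (if i = j then 2/9 * v $ j else 0))"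
      by (rule sum_subtractf)
    also have "(\<Sum>j=0..<n. 4/9 * v $ j) = 4/9 * s" unfolding s_def by (rule sum_distrib_left[symmetric])
    also have "(\<Sum>j=0..<n. (if i = j then 2/9 * v $ j else 0)) = 2/9 * v $ i"
      using i by simp
    finally show ?thesis by simp
  qed
  have "s = (\<Sum>j=0..<n. 2 * s)"
  proof -
    have "s = (\<Sum>j=0..<n. v $ j)" by (simp add: s_def)
    also have "\<dots> = (\<Sum>j=0..<n. 2 * s)" using vi by (intro sum.cong) auto
    finally show ?thesis .
  qed
  moreover have "(\<Sum>j=0..<n. 2 * s) = real n * (2 * s)" by simp
  ultimately have s2: "s = real n * (2 * s)" by (rule trans)
  have e1: "s * (2 * real n - 1) = real n * (2 * s) - s" by (simp add: algebra_simps)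
  then have "s * (2 * real n - 1) = 0" using s2 by linarith
  moreover have "2 * real n - 1 \<noteq> 0" using assms by simp
  ultimately have s0: "s = 0" by (metis mult_eq_0_iff)
  have "v $ i = 0" if "i < n" for i using vi[OF that] s0 by simp
  then have "v = 0\<^sub>v n" using v(1) by (intro eq_vecI) auto
  with v(2) show False by simp
qed

theorem lemma4p1:
  fixes nu :: nat
  assumes "nu \<ge> 2"
  shows "\<exists>r0 > 0. \<exists>c > 0. \<forall>r S. 0 < r \<and> r \<le> r0 \<and> S \<in> Vset nu r \<longrightarrow>
           \<bar>det (Amat S)\<bar> \<ge> c * real (Max S) ^ (3 * nu)"
proof -
  define D where "D = \<bar>det (M0 nu)\<bar>"
  have Dpos: "D > 0" using M0_det[of nu] assms by (simp add: D_def)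
  define K where "K = fact nu * real nu"
  have Kpos: "K > 0" using assms by (simp add: K_def)
  define e where "e = min (1/2) (D / (2 * K))"
  have epos: "e > 0" using Dpos Kpos by (simp add: e_def)
  have eK: "K * e \<le> D / 2"
  proof -
    have "K * e \<le> K * (D / (2 * K))" using Kpos by (intro mult_left_mono) (auto simp: e_def)
    also have "\<dots> = D / 2" using Kpos by simp
    finally show ?thesis .
  qed
  obtain d1 where d1: "d1 > 0" "\<forall>p. dist p (1::real,0::real) < d1 \<longrightarrow>
      dist (F1 (fst p) (snd p)) (F1 (fst (1::real,0::real)) (snd (1::real,0::real))) < e"
    using isCont_eps[OF cont1 epos] by blast
  obtain d2 where d2: "d2 > 0" "\<forall>p. dist p (1::real,1::real,0::real) < d2 \<longrightarrow>
      dist (F2 (fst p) (fst (snd p)) (snd (snd p)))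
        (F2 (fst (1::real,1::real,0::real)) (fst (snd (1::real,1::real,0::real))) (snd (snd (1::real,1::real,0::real)))) < e"
    using isCont_eps[OF cont2 epos] by blast
  define r0 where "r0 = min (1/2) (min (d1/4) (d2/4))"
  have r0pos: "r0 > 0" using d1 d2 by (simp add: r0_def)
  have main: "\<forall>r S. 0 < r \<and> r \<le> r0 \<and> S \<in> Vset nu r \<longrightarrow>
           \<bar>det (Amat S)\<bar> \<ge> D/2 * real (Max S) ^ (3 * nu)"
  proof (intro allI impI)
    fix r S assume H: "0 < r \<and> r \<le> r0 \<and> S \<in> Vset nu r"
    then have r: "0 < r" "r \<le> r0" and SV: "S \<in> Vset nu r" by simp_all
    have rd: "r \<le> d1/4" "r \<le> d2/4" using r unfolding r0_def by simp_all
    from SV have fin: "finite S" and cardS: "card S = nu" and Spos: "\<forall>j\<in>S. 0 < j"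
      and minS: "real (Min S) > 1 / r" and close: "\<forall>j\<in>S. \<bar>real j / real (Max S) - 1\<bar> \<le> r"
      unfolding Vset_def mem_Collect_eq by blast+
    have Sne: "S \<noteq> {}" using cardS assms by auto
    define J where "J = real (Max S)"
    have JS: "Max S \<in> S" using fin Sne by simp
    have Jpos: "J > 0" using JS Spos by (simp add: J_def)
    have "real (Min S) \<le> J" unfolding J_def using fin Sne by simp
    then have "1 / r < J" using minS by linarith
    then have tJ: "1 / J < r" using r Jpos by (simp add: field_simps)
    have tpos: "0 < 1 / J" using Jpos by simp
    define xs where "xs = sorted_list_of_set S"
    have lxs: "length xs = nu" using cardS by (simp add: xs_def)
    have dxs: "distinct xs" by (simp add: xs_def)
    have sxs: "set xs = S" using fin by (simp add: xs_def)
    have xsS: "a < nu \<Longrightarrow> xs ! a \<in> S" for a using lxs sxs nth_mem by blast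
    define N where "N = mat nu nu (\<lambda>(a,b). Aentry (xs ! a) (xs ! b) / J^3)"
    have NC: "N \<in> carrier_mat nu nu" by (simp add: N_def)
    have AN: "Amat S = (J^3) \<cdot>\<^sub>m N"
      unfolding Amat_def Let_def xs_def[symmetric] cardS N_def
      using Jpos by (intro eq_matI) auto
    have detA: "det (Amat S) = J ^ (3 * nu) * det N"
      unfolding AN using NC by (simp add: power_mult)
    have entries: "\<bar>N $$ (a,b) - M0 nu $$ (a,b)\<bar> \<le> e" if ab: "a < nu" "b < nu" for a b
    proof (cases "a = b")
      case True
      define j where "j = xs ! a"
      have jS: "j \<in> S" using xsS ab by (simp add: j_def)
      have jpos: "real j > 0" using jS Spos by simp
      have Ajj: "Aentry j j = 2*(4+(real j)^2)*(1+(real j)^2)/(9*real j)"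
        unfolding Aentry_def if_P[OF refl] diag_id[OF jpos] by simp
      have "N $$ (a,b) = Aentry j j / J^3" using ab True by (simp add: N_def j_def)
      also have "\<dots> = F1 (real j / J) (1 / J)" unfolding Ajj by (rule diag_scale[OF jpos Jpos])
      finally have "N $$ (a,b) = F1 (real j / J) (1 / J)" .
      moreover have "dist (real j / J, 1 / J) (1, 0) < d1"
      proof -
        have "dist (real j / J, 1 / J) (1, 0) \<le> \<bar>real j / J - 1\<bar> + \<bar>1 / J\<bar>" by (rule dist2)
        also have "\<dots> \<le> r + r" using close jS tJ tpos unfolding J_def by (intro add_mono) auto
        also have "\<dots> < d1" using rd d1 by linarith
        finally show ?thesis .
      qed
      ultimately have "dist (N $$ (a,b)) (F1 1 0) < e" using d1(2)[rule_format, of "(real j / J, 1 / J)"] by simp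
      then have "dist (N $$ (a,b)) (2/9) < e" by (simp only: F1v)
      then show ?thesis using ab True by (simp add: M0_def dist_real_def)
    next
      case False
      define j where "j = xs ! a"
      define k where "k = xs ! b"
      have jS: "j \<in> S" using xsS ab by (simp add: j_def)
      have kS: "k \<in> S" using xsS ab by (simp add: k_def)
      have jk: "j \<noteq> k" using False ab dxs lxs nth_eq_iff_index_eq unfolding j_def k_def by metis
      have jpos: "real j > 0" using jS Spos by simp
      have kpos: "real k > 0" using kS Spos by simp
      have Ajk: "Aentry j k = lam (real j) * bcoef (real j) (real k)"
        using jk by (simp add: Aentry_def)
      have "N $$ (a,b) = Aentry j k / J^3" using ab by (simp add: N_def j_def k_def)
      also have "\<dots> = F2 (real j / J) (real k / J) (1 / J)"
        unfolding Ajk by (rule off_scale[OF jpos kpos Jpos])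
      finally have "N $$ (a,b) = F2 (real j / J) (real k / J) (1 / J)" .
      moreover have "dist (real j / J, real k / J, 1 / J) (1, 1, 0) < d2"
      proof -
        have "dist (real j / J, real k / J, 1 / J) (1, 1, 0) \<le> \<bar>real j / J - 1\<bar> + \<bar>real k / J - 1\<bar> + \<bar>1 / J\<bar>"
          by (rule dist3)
        also have "\<dots> \<le> r + r + r" using close jS kS tJ tpos unfolding J_def by (intro add_mono) auto
        also have "\<dots> < d2" using rd d2 by linarith
        finally show ?thesis .
      qed
      ultimately have "dist (N $$ (a,b)) (F2 1 1 0) < e"
        using d2(2)[rule_format, of "(real j / J, real k / J, 1 / J)"] by simp
      then have "dist (N $$ (a,b)) (4/9) < e" by (simp only: F2v)
      then show ?thesis using ab False by (simp add: M0_def dist_real_def)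
    qed
    have bM: "\<forall>i<nu. \<forall>j<nu. \<bar>M0 nu $$ (i,j)\<bar> \<le> 1/2" by (simp add: M0_def)
    have pert: "\<bar>det N - det (M0 nu)\<bar> \<le> fact nu * real nu * e"
      by (rule det_pert[OF _ NC bM]) (use entries in \<open>auto simp: M0_def e_def\<close>)
    then have "\<bar>det N\<bar> \<ge> D / 2" using eK unfolding D_def K_def by linarith
    then have "J ^ (3 * nu) * (D / 2) \<le> J ^ (3 * nu) * \<bar>det N\<bar>"
      using Jpos by (intro mult_left_mono) auto
    then show "D / 2 * real (Max S) ^ (3 * nu) \<le> \<bar>det (Amat S)\<bar>"
      unfolding detA J_def[symmetric] using Jpos by (simp add: abs_mult mult.commute)
  qed
  have "D/2 > 0" using Dpos by simp
  then show ?thesis using r0pos main by blast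
qed

end
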